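(* For any pairwise distinct complex numbers $x_1,\dots,x_M$ and any function $f$ for which the expressions are defined, $$\mathcal A^{\pm}_{\{x\}}[f]=\mathcal A^{\mp}_{\{x\}}\!\left[-\frac{E^\pm_{\{x\}}}{E^\mp_{\{x\}}}f\right].$$
   Context: Let $\eta\in\mathbb C\setminus\{0\}$. For a family $\{x\}=\{x_1,\dots,x_M\}$ of complex numbers and $y\in\mathbb C$, $E^\pm_{\{x\}}(y)=\prod_{n=1}^M\frac{y-x_n\pm\eta}{y-x_n}$; at $y=x_m$ the ratio $E^\pm_{\{x\}}(x_m)/E^\mp_{\{x\}}(x_m)$ means $\prod_{n=1}^M\frac{x_m-x_n\pm\eta}{x_m-x_n\mp\eta}$ (the factor $n=m$ equals $-1$). With $V(x_1,\dots,x_M)=\prod_{1\le b<a\le M}(x_a-x_b)$ and $f$ a function defined at the $x_a$, $\mathcal A^\pm_{\{x\}}[f]=\det_{1\le a,b\le M}\big[x_a^{b-1}-f(x_a)(x_a\pm\eta)^{b-1}\big]/V(x_1,\dots,x_M)$. Here $-\frac{E^\pm_{\{x\}}}{E^\mp_{\{x\}}}f$ denotes the function $x_a\mapsto-\frac{E^\pm_{\{x\}}(x_a)}{E^\mp_{\{x\}}(x_a)}f(x_a)$. *)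

theory Defs
  imports Complex_Main "Jordan_Normal_Form.Determinant"
begin

(* Families x_1..x_M are represented as x :: nat => complex on indices 0..<M
   (index a here corresponds to a+1 in the paper). *)

definition vandermonde :: "nat \<Rightarrow> (nat \<Rightarrow> complex) \<Rightarrow> complex" where
  "vandermonde M x = (\<Prod>a<M. \<Prod>b<a. x a - x b)"

(* A^{\<pm>}_{x}[f] with h = \<pm>\<eta> :
   det_{a,b}[ x_a^(b-1) - f(x_a) (x_a + h)^(b-1) ] / V(x_1,...,x_M) *)
definition calA :: "complex \<Rightarrow> nat \<Rightarrow> (nat \<Rightarrow> complex) \<Rightarrow> (complex \<Rightarrow> complex) \<Rightarrow> complex" where
  "calA h M x f =
     det (mat M M (\<lambda>(a, b). x a ^ b - f (x a) * (x a + h) ^ b)) / vandermonde M x"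

definition calE :: "complex \<Rightarrow> nat \<Rightarrow> (nat \<Rightarrow> complex) \<Rightarrow> complex \<Rightarrow> complex" where
  "calE h M x y = (\<Prod>n<M. (y - x n + h) / (y - x n))"

(* The ratio E^{\<pm>}/E^{\<mp>} (h = \<pm>\<eta>), with the paper's convention at y = x_m:
   prod_n (y - x_n + h)/(y - x_n - h); the factor n = m equals -1 there. *)
definition calEratio :: "complex \<Rightarrow> nat \<Rightarrow> (nat \<Rightarrow> complex) \<Rightarrow> complex \<Rightarrow> complex" where
  "calEratio h M x y = (\<Prod>n<M. (y - x n + h) / (y - x n - h))"

end

theory Submission imports Defs begin

lemma det_rowscale:
  fixes g :: "nat \<Rightarrow> nat \<Rightarrow> 'a::comm_ring_1"
  shows "det (mat n n (\<lambda>(i,j). c i * g i j)) = prod c {..<n} * det (mat n n (\<lambda>(i,j). g i j))"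
proof -
  have "det (mat n n (\<lambda>(i,j). c i * g i j)) =
     (\<Sum>p\<in>{p. p permutes {0..<n}}. signof p * (\<Prod>i = 0..<n. c i * g i (p i)))"
    by (subst det_def'[of _ n]) auto
  also have "\<dots> = (\<Sum>p\<in>{p. p permutes {0..<n}}. prod c {..<n} * (signof p * (\<Prod>i = 0..<n. g i (p i))))"
    by (rule sum.cong) (auto simp: prod.distrib atLeast0LessThan)
  also have "\<dots> = prod c {..<n} * det (mat n n (\<lambda>(i,j). g i j))"
    by (subst det_def'[of _ n]) (auto simp: sum_distrib_left)
  finally show ?thesis .
qed

lemma det_expand:
  fixes u v :: "nat \<Rightarrow> nat \<Rightarrow> 'a::comm_ring_1"
  shows "det (mat n n (\<lambda>(a,b). u a b + c a * v a b)) =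
    (\<Sum>S\<in>Pow {..<n}. prod c S * det (mat n n (\<lambda>(a,b). if a \<in> S then v a b else u a b)))"
proof -
  have "det (mat n n (\<lambda>(a,b). u a b + c a * v a b)) =
     (\<Sum>p\<in>{p. p permutes {..<n}}. signof p * (\<Prod>i \<in> {..<n}. c i * v i (p i) + u i (p i)))"
    by (subst det_def'[of _ n]) (auto simp: atLeast0LessThan add.commute)
  also have "\<dots> = (\<Sum>p\<in>{p. p permutes {..<n}}. signof p * (\<Sum>S\<in>Pow {..<n}. (\<Prod>i\<in>S. c i * v i (p i)) * (\<Prod>i\<in>{..<n}-S. u i (p i))))"
    by (simp add: prod_add)
  also have "\<dots> = (\<Sum>S\<in>Pow {..<n}. \<Sum>p\<in>{p. p permutes {..<n}}. prod c S * (signof p * (\<Prod>i\<in>{..<n}. (if i \<in> S then v i (p i) else u i (p i)))))"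
  proof -
    have "(\<Prod>i\<in>{..<n}. (if i \<in> S then v i (p i) else u i (p i))) = (\<Prod>i\<in>S. v i (p i)) * (\<Prod>i\<in>{..<n}-S. u i (p i))"
      if "S \<subseteq> {..<n}" for S p
      using that by (simp add: prod.If_cases Diff_eq Int_commute inf.absorb1 inf.absorb2)
    then show ?thesis
      by (subst sum.swap) (auto simp: sum_distrib_left prod.distrib intro!: sum.cong)
  qed
  also have "\<dots> = (\<Sum>S\<in>Pow {..<n}. prod c S * det (mat n n (\<lambda>(a,b). if a \<in> S then v a b else u a b)))"
    by (rule sum.cong[OF refl], subst det_def'[of _ n]) (auto simp: sum_distrib_left atLeast0LessThan intro!: sum.cong prod.cong)
  finally show ?thesis .
qed

lemma prod_square:
  fixes g :: "nat \<Rightarrow> nat \<Rightarrow> 'a::comm_monoid_mult"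
  shows "(\<Prod>a<M. \<Prod>n<M. g a n) = (\<Prod>a<M. g a a) * (\<Prod>a<M. \<Prod>b<a. g a b * g b a)"
proof (induction M)
  case 0 then show ?case by simp
next
  case (Suc M)
  then show ?case by (simp add: prod.distrib ac_simps)
qed

lemma vander:
  fixes y :: "nat \<Rightarrow> 'a::comm_ring_1"
  shows "det (mat M M (\<lambda>(a,b). y a ^ b)) = (\<Prod>a<M. \<Prod>b<a. y a - y b)"
proof (induction M)
  case 0 then show ?case by (simp add: det_dim_zero)
next
  case (Suc M)
  define A where "A = mat (Suc M) (Suc M) (\<lambda>(a,b). y a ^ b)"
  define U :: "'a mat" where "U = mat (Suc M) (Suc M) (\<lambda>(i,j). if i = j then 1 else if Suc i = j then - y M else 0)"
  define B where "B = mat (Suc M) (Suc M) (\<lambda>(a,b). if b = 0 then 1 else y a ^ (b - 1) * (y a - y M))"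
  have A: "A \<in> carrier_mat (Suc M) (Suc M)" and U: "U \<in> carrier_mat (Suc M) (Suc M)"
    and B: "B \<in> carrier_mat (Suc M) (Suc M)" by (auto simp: A_def U_def B_def)
  have detU: "det U = 1"
  proof -
    have "upper_triangular U" unfolding upper_triangular_def U_def by auto
    then have "det U = prod_list (diag_mat U)" using det_upper_triangular U by blast
    also have "diag_mat U = map (\<lambda>i. 1) [0..<Suc M]"
      unfolding diag_mat_def U_def by (intro map_cong) auto
    also have "prod_list (map (\<lambda>i::nat. 1::'a) [0..<Suc M]) = 1"
      by (induct M) auto
    finally show ?thesis .
  qed
  have AU: "A * U = B"
  proof (rule eq_matI)
    fix a b assume a: "a < dim_row B" and b: "b < dim_col B"
    then have ab: "a < Suc M" "b < Suc M" by (auto simp: B_def)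
    have "(A * U) $$ (a,b) = (\<Sum>k<Suc M. y a ^ k * (if k = b then 1 else if Suc k = b then - y M else 0))"
      using ab by (simp add: A_def U_def scalar_prod_def atLeast0LessThan)
    also have "\<dots> = (\<Sum>k<Suc M. (if k = b then y a ^ k else 0)) + (\<Sum>k<Suc M. (if Suc k = b then - y M * y a ^ k else 0))"
      by (subst sum.distrib[symmetric]) (rule sum.cong, auto)
    also have "\<dots> = B $$ (a,b)"
    proof (cases b)
      case 0 then show ?thesis using ab by (simp add: B_def)
    next
      case (Suc b')
      have "(\<Sum>k<Suc M. (if Suc k = b then - y M * y a ^ k else 0)) = (\<Sum>k<Suc M. (if k = b' then - y M * y a ^ k else 0))"
        using Suc by (intro sum.cong) auto
      then show ?thesis using ab Suc by (cases "Suc b' = M") (auto simp: B_def algebra_simps)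
    qed
    finally show "(A * U) $$ (a,b) = B $$ (a,b)" .
  qed (auto simp: A_def U_def B_def)
  have "det A = det B" using det_mult[OF A U] detU AU by simp
  also have "det B = (\<Sum>j<Suc M. B $$ (M,j) * cofactor B M j)"
    using laplace_expansion_row[OF B] by simp
  also have "\<dots> = cofactor B M 0"
    by (subst sum.lessThan_Suc_shift) (simp add: B_def)
  also have "\<dots> = (-1)^M * det (mat M M (\<lambda>(a,b). (y a - y M) * y a ^ b))"
  proof -
    have "mat_delete B M 0 = mat M M (\<lambda>(a,b). (y a - y M) * y a ^ b)"
      by (rule eq_matI) (auto simp: mat_delete_def B_def)
    then show ?thesis by (simp add: cofactor_def)
  qed
  also have "\<dots> = (-1)^M * (\<Prod>a<M. y a - y M) * (\<Prod>a<M. \<Prod>b<a. y a - y b)"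
    using det_rowscale[where c="\<lambda>a. y a - y M" and g="\<lambda>a b. y a ^ b" and n=M] Suc by simp
  also have "(-1)^M * (\<Prod>a<M. y a - y M) = (\<Prod>a<M. y M - y a)"
  proof -
    have "(\<Prod>a<M. y M - y a) = (\<Prod>a<M. (-1) * (y a - y M))" by (rule prod.cong) auto
    then show ?thesis by (simp only: prod.distrib prod_constant card_lessThan)
  qed
  finally show ?case by (simp add: A_def mult.commute)
qed


lemma keyS:
  fixes x :: "nat \<Rightarrow> complex" and h :: complex
  assumes h: "h \<noteq> 0"
    and H: "\<And>a b. a < M \<Longrightarrow> b < M \<Longrightarrow> x a - x b \<noteq> h"
    and H': "\<And>a b. a < M \<Longrightarrow> b < M \<Longrightarrow> x a - x b \<noteq> - h"
    and S: "S \<subseteq> {..<M}"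
  defines "y \<equiv> \<lambda>a. if a \<in> S then x a + h else x a"
    and "z \<equiv> \<lambda>a. if a \<in> S then x a + - h else x a"
  shows "(\<Prod>a\<in>S. -1) * (\<Prod>a<M. \<Prod>b<a. y a - y b)
       = (\<Prod>a\<in>S. calEratio h M x (x a)) * (\<Prod>a<M. \<Prod>b<a. z a - z b)"
proof -
  define \<rho> where "\<rho> = (\<lambda>a n. (x a - x n + h) / (x a - x n - h))"
  define g where "g = (\<lambda>a n. if a \<in> S then \<rho> a n else 1)"
  have "(\<Prod>a\<in>S. calEratio h M x (x a)) = (\<Prod>a<M. if a \<in> S then calEratio h M x (x a) else 1)"
    using S by (simp add: prod.If_cases inf.absorb2)
  also have "\<dots> = (\<Prod>a<M. \<Prod>n<M. g a n)"
    by (rule prod.cong) (auto simp: g_def calEratio_def \<rho>_def)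
  also have "\<dots> = (\<Prod>a<M. g a a) * (\<Prod>a<M. \<Prod>b<a. g a b * g b a)"
    by (rule prod_square)
  also have "(\<Prod>a<M. g a a) = (\<Prod>a\<in>S. -1)"
  proof -
    have "(\<Prod>a<M. g a a) = (\<Prod>a<M. if a \<in> S then -1 else 1)"
      using h by (intro prod.cong) (auto simp: g_def \<rho>_def)
    also have "\<dots> = (\<Prod>a\<in>S. -1)"
      using S by (simp add: prod.If_cases inf.absorb2)
    finally show ?thesis .
  qed
  finally have E: "(\<Prod>a\<in>S. calEratio h M x (x a)) = (\<Prod>a\<in>S. -1) * (\<Prod>a<M. \<Prod>b<a. g a b * g b a)" .
  have P: "(\<Prod>a<M. \<Prod>b<a. g a b * g b a) * (\<Prod>a<M. \<Prod>b<a. z a - z b) = (\<Prod>a<M. \<Prod>b<a. y a - y b)"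
  proof -
    have "g a b * g b a * (z a - z b) = y a - y b" if ab: "b < a" "a < M" for a b
    proof -
      have d1: "x a - x b - h \<noteq> 0" "x a - x b + h \<noteq> 0" "x b - x a - h \<noteq> 0" "x b - x a + h \<noteq> 0"
        using H[of a b] H'[of a b] H[of b a] H'[of b a] ab
        by (auto simp: algebra_simps)
      have r: "\<rho> b a = (x a - x b - h) / (x a - x b + h)"
      proof -
        have "x b - x a + h = - (x a - x b - h)" "x b - x a - h = - (x a - x b + h)" by simp_all
        then show ?thesis unfolding \<rho>_def by (simp only: minus_divide_divide)
      qed
      have r1: "\<rho> a b * \<rho> b a = 1" using d1 unfolding r by (simp add: \<rho>_def)
      show ?thesis
        using d1 r1 r by (cases "a \<in> S"; cases "b \<in> S") (auto simp: g_def y_def z_def, auto simp: \<rho>_def field_simps)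
    qed
    then show ?thesis
      by (simp add: prod.distrib[symmetric])
  qed
  show ?thesis using E P by (simp add: mult.assoc)
qed


lemma rearr: "(a::'a::comm_semiring_1) * v = r * w \<Longrightarrow> (a * f) * v = (r * f) * w"
  by (metis mult.commute mult.assoc)

lemma detG:
  fixes x :: "nat \<Rightarrow> complex" and h :: complex and f :: "complex \<Rightarrow> complex"
  assumes h: "h \<noteq> 0"
    and H: "\<And>a b. a < M \<Longrightarrow> b < M \<Longrightarrow> x a - x b \<noteq> h"
    and H': "\<And>a b. a < M \<Longrightarrow> b < M \<Longrightarrow> x a - x b \<noteq> - h"
  shows "det (mat M M (\<lambda>(a, b). x a ^ b - f (x a) * (x a + h) ^ b)) =
         det (mat M M (\<lambda>(a, b). x a ^ b - (- calEratio h M x (x a) * f (x a)) * (x a + - h) ^ b))"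
proof -
  have L: "mat M M (\<lambda>(a, b). x a ^ b - f (x a) * (x a + h) ^ b)
     = mat M M (\<lambda>(a, b). x a ^ b + (- f (x a)) * (x a + h) ^ b)" by simp
  have R: "mat M M (\<lambda>(a, b). x a ^ b - (- calEratio h M x (x a) * f (x a)) * (x a + - h) ^ b)
     = mat M M (\<lambda>(a, b). x a ^ b + (calEratio h M x (x a) * f (x a)) * (x a + - h) ^ b)" by simp
  have V: "det (mat M M (\<lambda>(a, b). if a \<in> S then (x a + k) ^ b else x a ^ b))
     = (\<Prod>a<M. \<Prod>b<a. (if a \<in> S then x a + k else x a) - (if b \<in> S then x b + k else x b))" for S k
  proof -
    have "mat M M (\<lambda>(a, b). if a \<in> S then (x a + k) ^ b else x a ^ b)
        = mat M M (\<lambda>(a, b). (if a \<in> S then x a + k else x a) ^ b)" by (rule cong_mat) auto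
    then show ?thesis by (simp only: vander)
  qed
  show ?thesis
    unfolding L R det_expand
  proof (rule sum.cong[OF refl])
    fix S assume "S \<in> Pow {..<M}"
    then have S: "S \<subseteq> {..<M}" by auto
    have F1: "(\<Prod>a\<in>S. - f (x a)) = (\<Prod>a\<in>S. -1) * (\<Prod>a\<in>S. f (x a))"
      by (subst prod.distrib[symmetric]) simp
    have F2: "(\<Prod>a\<in>S. calEratio h M x (x a) * f (x a)) = (\<Prod>a\<in>S. calEratio h M x (x a)) * (\<Prod>a\<in>S. f (x a))"
      by (simp add: prod.distrib)
    show "(\<Prod>a\<in>S. - f (x a)) * det (mat M M (\<lambda>(a, b). if a \<in> S then (x a + h) ^ b else x a ^ b)) =
          (\<Prod>a\<in>S. calEratio h M x (x a) * f (x a)) * det (mat M M (\<lambda>(a, b). if a \<in> S then (x a + - h) ^ b else x a ^ b))"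
      unfolding V F1 F2 by (rule rearr[OF keyS[OF h H H' S, unfolded]])
  qed
qed

theorem mainTheorem5:
  fixes \<eta> :: complex and M :: nat and x :: "nat \<Rightarrow> complex" and f :: "complex \<Rightarrow> complex"
  assumes "\<eta> \<noteq> 0"
    and "inj_on x {..<M}"
    and "\<And>a b. a < M \<Longrightarrow> b < M \<Longrightarrow> x a - x b \<noteq> \<eta>"
  shows "calA \<eta> M x f = calA (-\<eta>) M x (\<lambda>y. - calEratio \<eta> M x y * f y)
       \<and> calA (-\<eta>) M x f = calA \<eta> M x (\<lambda>y. - calEratio (-\<eta>) M x y * f y)"
proof
  have H': "x a - x b \<noteq> - \<eta>" if "a < M" "b < M" for a b
    using assms(3)[OF that(2,1)] by (auto simp: algebra_simps)
  show "calA \<eta> M x f = calA (-\<eta>) M x (\<lambda>y. - calEratio \<eta> M x y * f y)"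
    unfolding calA_def using detG[OF assms(1) assms(3) H', where f=f] by (simp only: diff_conv_add_uminus)
  have G2: "det (mat M M (\<lambda>(a, b). x a ^ b - f (x a) * (x a + - \<eta>) ^ b)) =
         det (mat M M (\<lambda>(a, b). x a ^ b - (- calEratio (-\<eta>) M x (x a) * f (x a)) * (x a + - (-\<eta>)) ^ b))"
    by (rule detG) (use assms(1) H' assms(3) in auto)
  show "calA (-\<eta>) M x f = calA \<eta> M x (\<lambda>y. - calEratio (-\<eta>) M x y * f y)"
    unfolding calA_def using G2 by (simp only: diff_conv_add_uminus minus_minus)
qed

end
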